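(* Assume the setting in the context, with a decomposition of $\mathcal X$ over $A$, a cost function $g\in\mathcal G_s$ and $\alpha\in(0,1)$. Then $\{(A,\rho_i\circ B,g,\alpha)\}_{i\in\mathcal I}$ is a decomposition (in the sense of Definition 2) of $(A,B,g,\alpha)$ if and only if for every choice of optimal control laws $u_i^*$ of the subproblems $(A,\rho_i\circ B,g,\alpha)$, $i\in\mathcal I$, there exists an optimal control law $u^*$ of $(A,B,g,\alpha)$ such that $$\rho_i\big(Ax+Bu^*(x)\big)=A\rho_i(x)+\rho_i\big(Bu_i^*(\rho_i(x))\big)\qquad\forall x\in\mathcal X,\ \forall i\in\mathcal I.$$
   Context: Let $\mathcal F$ be a field and $\mathcal X,\mathcal U$ finite-dimensional vector spaces over $\mathcal F$. Let $A:\mathcal X\to\mathcal X$ and $B:\mathcal U\to\mathcal X$ be linear maps with $B$ injective, and consider the system $x_{t+1}=Ax_t+Bu_t$ and a cost $g:\mathcal X\to\mathbb R_{\ge 0}$ with $g(x)=0\iff x=0$. Standing assumption: all minima appearing below are attained. Infinite-horizon problem $(A,B,g,\alpha)$: policies $\pi(x_0)=(\pi_t(x_0))_{t\in\mathbb Z_+}\in\mathcal U^{\mathbb Z_+}$, cost $J(x_0,\pi)=\sum_{t\ge0}\alpha^tg(x_t)$ with $x_{t+1}=Ax_t+B\pi_t(x_0)$; $J^*(x_0)=\min_\pi J(x_0,\pi)$, which satisfies $J^*(x)=g(x)+\alpha\min_uJ^*(Ax+Bu)$. An optimal control law of $(A,B,g,\alpha)$ is a map $u^*:\mathcal X\to\mathcal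 U$ with $u^*(x)\in\operatorname{argmin}_{u\in\mathcal U}J^*(Ax+Bu)$. A decomposition of $\mathcal X$ over $A$ is a direct sum $\mathcal X=\mathcal X_1\oplus\cdots\oplus\mathcal X_r$ with $r>1$ and $A\mathcal X_i\subseteq\mathcal X_i$, $i\in\mathcal I=\{1,\dots,r\}$; $\rho_i:\mathcal X\to\mathcal X_i$ is the projection along the other summands. $\mathcal G_s$ is the set of $h:\mathcal X\to\mathbb R_{\ge0}$ with $h(x)=\sum_i h(\rho_i(x))$ for all $x$. Subproblem $(A,\rho_i\circ B,g,\alpha)$: the system $x_{i,t+1}=Ax_{i,t}+\rho_i(Bu_{i,t})$ with states in $\mathcal X_i$ and inputs in $\mathcal U$, policies $\pi_i(x_{i,0})\in\mathcal U^{\mathbb Z_+}$, cost $J_i(x_{i,0},\pi_i)=\sum_{t\ge0}\alpha^tg(x_{i,t})$, optimal cost $J_i^*$, optimal policies $\pi_i^*$ with components $\pi^*_{i,t}$; an optimal control law is $u_i^*:\mathcal X_i\to\mathcal U$ with $u_i^*(z)\in\operatorname{argmin}_uJ_i^*(Az+\rho_i(Bu))$. Definition 2: $\{(A,\rho_i\circ B,g,\alpha)\}_{i\in\mathcal I}$ is a decomposition of $(A,B,g,\alpha)$ if for every $x\in\mathcal X$: $J^*(x)=\sum_iJ_i^*(\rho_i(x))$, and for every choice of optimal policies $\pi_i^*(\rho_i(x))$ there is an optimal policy $\pi^*(x)$ of $(A,B,g,\alpha)$ with $B\pi_t^*(x)=\sum_{i}\rho_i\big(B\pi^*_{i,t}(\rho_i(x))\big)$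 for all $t\in\mathbb Z_+$. *)

theory Defs
  imports Main "HOL-Library.Extended_Nonnegative_Real"
begin

definition fin_dim_vs :: "('f::field \<Rightarrow> 'v::ab_group_add \<Rightarrow> 'v) \<Rightarrow> bool" where
  "fin_dim_vs s \<longleftrightarrow> vector_space s \<and> (\<exists>S. finite S \<and> module.span s S = UNIV)"

definition is_decomposition ::
  "('f::field \<Rightarrow> 'x::ab_group_add \<Rightarrow> 'x) \<Rightarrow> ('x \<Rightarrow> 'x) \<Rightarrow> nat \<Rightarrow> (nat \<Rightarrow> 'x set) \<Rightarrow> bool" where
  "is_decomposition sX A r Xs \<longleftrightarrow> 1 < r \<and>
     (\<forall>i\<in>{1..r}. module.subspace sX (Xs i) \<and> A ` Xs i \<subseteq> Xs i) \<and>
     (\<forall>x. \<exists>!f. (\<forall>i\<in>{1..r}. f i \<in> Xs i) \<and> (\<forall>i. i \<notin> {1..r} \<longrightarrow> f i = 0) \<and>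
               x = (\<Sum>i\<in>{1..r}. f i))"

definition rho :: "nat \<Rightarrow> (nat \<Rightarrow> 'x::ab_group_add set) \<Rightarrow> nat \<Rightarrow> 'x \<Rightarrow> 'x" where
  "rho r Xs i x = (THE f. (\<forall>j\<in>{1..r}. f j \<in> Xs j) \<and> (\<forall>j. j \<notin> {1..r} \<longrightarrow> f j = 0) \<and>
                          x = (\<Sum>j\<in>{1..r}. f j)) i"

definition separable_cost :: "nat \<Rightarrow> (nat \<Rightarrow> 'x::ab_group_add set) \<Rightarrow> ('x \<Rightarrow> real) \<Rightarrow> bool" where
  "separable_cost r Xs h \<longleftrightarrow> (\<forall>x. 0 \<le> h x) \<and>
     (\<forall>x. h x = (\<Sum>i\<in>{1..r}. h (rho r Xs i x)))"

primrec traj :: "('x::ab_group_add \<Rightarrow> 'x) \<Rightarrow> ('u \<Rightarrow> 'x) \<Rightarrow> 'x \<Rightarrow> (nat \<Rightarrow> 'u) \<Rightarrow> nat \<Rightarrow> 'x" where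
  "traj A Bm x0 p 0 = x0"
| "traj A Bm x0 p (Suc t) = A (traj A Bm x0 p t) + Bm (p t)"

definition cost :: "('x::ab_group_add \<Rightarrow> 'x) \<Rightarrow> ('u \<Rightarrow> 'x) \<Rightarrow> ('x \<Rightarrow> real) \<Rightarrow> real \<Rightarrow>
    'x \<Rightarrow> (nat \<Rightarrow> 'u) \<Rightarrow> ennreal" where
  "cost A Bm g \<alpha> x0 p = (\<Sum>t. ennreal (\<alpha> ^ t * g (traj A Bm x0 p t)))"

definition Jstar :: "('x::ab_group_add \<Rightarrow> 'x) \<Rightarrow> ('u \<Rightarrow> 'x) \<Rightarrow> ('x \<Rightarrow> real) \<Rightarrow> real \<Rightarrow> 'x \<Rightarrow> ennreal" where
  "Jstar A Bm g \<alpha> x0 = (INF p. cost A Bm g \<alpha> x0 p)"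

definition optimal_policy where
  "optimal_policy A Bm g \<alpha> x0 p \<longleftrightarrow> cost A Bm g \<alpha> x0 p = Jstar A Bm g \<alpha> x0"

definition is_argmin_input where
  "is_argmin_input A Bm g \<alpha> z u \<longleftrightarrow>
     (\<forall>v. Jstar A Bm g \<alpha> (A z + Bm u) \<le> Jstar A Bm g \<alpha> (A z + Bm v))"

text \<open>Optimal control law on the state set S (S = UNIV for the full problem, S = X_i for the
  i-th subproblem).\<close>
definition optimal_control_law where
  "optimal_control_law A Bm g \<alpha> S u \<longleftrightarrow> (\<forall>z\<in>S. is_argmin_input A Bm g \<alpha> z (u z))"

definition minima_attained where
  "minima_attained A Bm g \<alpha> S \<longleftrightarrow>
     (\<forall>z\<in>S. (\<exists>p. optimal_policy A Bm g \<alpha> z p) \<and> (\<exists>u. is_argmin_input A Bm g \<alpha> z u))"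

definition is_problem_decomposition where
  "is_problem_decomposition A B g \<alpha> r Xs \<longleftrightarrow>
     (\<forall>x. Jstar A B g \<alpha> x = (\<Sum>i\<in>{1..r}. Jstar A (rho r Xs i \<circ> B) g \<alpha> (rho r Xs i x))) \<and>
     (\<forall>x ps. (\<forall>i\<in>{1..r}. optimal_policy A (rho r Xs i \<circ> B) g \<alpha> (rho r Xs i x) (ps i)) \<longrightarrow>
        (\<exists>p. optimal_policy A B g \<alpha> x p \<and>
              (\<forall>t. B (p t) = (\<Sum>i\<in>{1..r}. rho r Xs i (B (ps i t))))))"

end

theory Submission
  imports Defs
begin

section \<open>Dynamic programming facts\<close>

lemma traj_shift: "traj A Bm x p (Suc t) = traj A Bm (A x + Bm (p 0)) (\<lambda>n. p (Suc n)) t"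
  by (induction t) auto

lemma ennreal_suminf_head: "(\<Sum>n. f n :: ennreal) = f 0 + (\<Sum>n. f (Suc n))"
proof -
  have "(\<lambda>n. f (Suc n)) sums (\<Sum>n. f (Suc n))" by (rule summable_sums) (rule summableI)
  hence "f sums ((\<Sum>n. f (Suc n)) + f 0)" by (rule sums_Suc)
  from sums_unique[OF this] show ?thesis by (simp add: add.commute)
qed

lemma cost_step:
  assumes g0: "\<forall>x. 0 \<le> g x" and a0: "0 \<le> \<alpha>"
  shows "cost A Bm g \<alpha> x p = ennreal (g x) + ennreal \<alpha> * cost A Bm g \<alpha> (A x + Bm (p 0)) (\<lambda>n. p (Suc n))"
proof -
  have "cost A Bm g \<alpha> x p = ennreal (\<alpha>^0 * g (traj A Bm x p 0)) + (\<Sum>t. ennreal (\<alpha>^Suc t * g (traj A Bm x p (Suc t))))"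
    unfolding cost_def by (rule ennreal_suminf_head)
  also have "(\<lambda>t. ennreal (\<alpha>^Suc t * g (traj A Bm x p (Suc t)))) = (\<lambda>t. ennreal \<alpha> * ennreal (\<alpha>^t * g (traj A Bm (A x + Bm (p 0)) (\<lambda>n. p (Suc n)) t)))"
  proof
    fix t
    have "\<alpha>^Suc t * g (traj A Bm x p (Suc t)) = \<alpha> * (\<alpha>^t * g (traj A Bm (A x + Bm (p 0)) (\<lambda>n. p (Suc n)) t))"
      unfolding traj_shift by (simp add: mult.assoc)
    also have "ennreal \<dots> = ennreal \<alpha> * ennreal (\<alpha>^t * g (traj A Bm (A x + Bm (p 0)) (\<lambda>n. p (Suc n)) t))"
      using a0 g0 by (intro ennreal_mult) auto
    finally show "ennreal (\<alpha>^Suc t * g (traj A Bm x p (Suc t))) = ennreal \<alpha> * ennreal (\<alpha>^t * g (traj A Bm (A x + Bm (p 0)) (\<lambda>n. p (Suc n)) t))" .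
  qed
  finally show ?thesis by (simp add: cost_def)
qed

lemma ennreal_cancel:
  assumes "0 < \<alpha>" "ennreal c + ennreal \<alpha> * a \<le> ennreal c + ennreal \<alpha> * b"
  shows "a \<le> b"
  using assms by (simp add: ennreal_add_left_cancel_le ennreal_mult_le_mult_iff)

lemma Jstar_le_step:
  assumes g0: "\<forall>x. 0 \<le> g x" and a0: "0 < \<alpha>"
    and inv: "\<forall>z\<in>S. \<forall>v. A z + Bm v \<in> S" and att: "minima_attained A Bm g \<alpha> S"
    and z: "z \<in> S"
  shows "Jstar A Bm g \<alpha> z \<le> ennreal (g z) + ennreal \<alpha> * Jstar A Bm g \<alpha> (A z + Bm v)"
proof -
  let ?y = "A z + Bm v"
  obtain q where q: "optimal_policy A Bm g \<alpha> ?y q"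
    using att inv z unfolding minima_attained_def by blast
  define p where "p = (\<lambda>t. case t of 0 \<Rightarrow> v | Suc n \<Rightarrow> q n)"
  have "Jstar A Bm g \<alpha> z \<le> cost A Bm g \<alpha> z p" unfolding Jstar_def by (rule INF_lower) simp
  also have "\<dots> = ennreal (g z) + ennreal \<alpha> * cost A Bm g \<alpha> ?y q"
    using g0 a0 by (subst cost_step) (auto simp: p_def)
  also have "\<dots> = ennreal (g z) + ennreal \<alpha> * Jstar A Bm g \<alpha> ?y"
    using q unfolding optimal_policy_def by simp
  finally show ?thesis .
qed

lemma opt_step:
  assumes g0: "\<forall>x. 0 \<le> g x" and a0: "0 < \<alpha>"
    and inv: "\<forall>z\<in>S. \<forall>v. A z + Bm v \<in> S" and att: "minima_attained A Bm g \<alpha> S"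
    and z: "z \<in> S" and opt: "optimal_policy A Bm g \<alpha> z p"
  shows "optimal_policy A Bm g \<alpha> (A z + Bm (p 0)) (\<lambda>n. p (Suc n))"
    and "is_argmin_input A Bm g \<alpha> z (p 0)"
proof -
  let ?z1 = "A z + Bm (p 0)" and ?sp = "\<lambda>n. p (Suc n)"
  have e: "Jstar A Bm g \<alpha> z = ennreal (g z) + ennreal \<alpha> * cost A Bm g \<alpha> ?z1 ?sp"
    using opt cost_step[OF g0 less_imp_le[OF a0], of A Bm z p] unfolding optimal_policy_def by metis
  have le1: "Jstar A Bm g \<alpha> z \<le> ennreal (g z) + ennreal \<alpha> * Jstar A Bm g \<alpha> ?z1"
    by (rule Jstar_le_step[OF g0 a0 inv att z])
  have le2: "Jstar A Bm g \<alpha> ?z1 \<le> cost A Bm g \<alpha> ?z1 ?sp"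
    unfolding Jstar_def by (rule INF_lower) simp
  from e le1 have "cost A Bm g \<alpha> ?z1 ?sp \<le> Jstar A Bm g \<alpha> ?z1"
    using ennreal_cancel[OF a0] by metis
  with le2 show o: "optimal_policy A Bm g \<alpha> ?z1 ?sp"
    unfolding optimal_policy_def by (simp add: antisym)
  show "is_argmin_input A Bm g \<alpha> z (p 0)"
    unfolding is_argmin_input_def
  proof
    fix v
    have "ennreal (g z) + ennreal \<alpha> * Jstar A Bm g \<alpha> ?z1 = Jstar A Bm g \<alpha> z"
      using e o unfolding optimal_policy_def by simp
    also have "\<dots> \<le> ennreal (g z) + ennreal \<alpha> * Jstar A Bm g \<alpha> (A z + Bm v)"
      by (rule Jstar_le_step[OF g0 a0 inv att z])
    finally show "Jstar A Bm g \<alpha> ?z1 \<le> Jstar A Bm g \<alpha> (A z + Bm v)"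
      using ennreal_cancel[OF a0] by metis
  qed
qed

lemma argmin_step:
  assumes g0: "\<forall>x. 0 \<le> g x" and a0: "0 < \<alpha>"
    and inv: "\<forall>z\<in>S. \<forall>v. A z + Bm v \<in> S" and att: "minima_attained A Bm g \<alpha> S"
    and z: "z \<in> S" and am: "is_argmin_input A Bm g \<alpha> z v"
  shows "Jstar A Bm g \<alpha> z = ennreal (g z) + ennreal \<alpha> * Jstar A Bm g \<alpha> (A z + Bm v)"
proof (rule antisym)
  show "Jstar A Bm g \<alpha> z \<le> ennreal (g z) + ennreal \<alpha> * Jstar A Bm g \<alpha> (A z + Bm v)"
    by (rule Jstar_le_step[OF g0 a0 inv att z])
  obtain q where q: "optimal_policy A Bm g \<alpha> z q"
    using att z unfolding minima_attained_def by blast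
  have o: "optimal_policy A Bm g \<alpha> (A z + Bm (q 0)) (\<lambda>n. q (Suc n))"
    by (rule opt_step(1)[OF g0 a0 inv att z q])
  have "ennreal (g z) + ennreal \<alpha> * Jstar A Bm g \<alpha> (A z + Bm v)
      \<le> ennreal (g z) + ennreal \<alpha> * Jstar A Bm g \<alpha> (A z + Bm (q 0))"
    using am unfolding is_argmin_input_def by (intro add_left_mono mult_left_mono) auto
  also have "\<dots> = cost A Bm g \<alpha> z q"
    using o cost_step[OF g0 less_imp_le[OF a0], of A Bm z q] unfolding optimal_policy_def by metis
  also have "\<dots> = Jstar A Bm g \<alpha> z" using q unfolding optimal_policy_def by simp
  finally show "ennreal (g z) + ennreal \<alpha> * Jstar A Bm g \<alpha> (A z + Bm v) \<le> Jstar A Bm g \<alpha> z" .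
qed

lemma argmin_then_opt:
  assumes g0: "\<forall>x. 0 \<le> g x" and a0: "0 < \<alpha>"
    and inv: "\<forall>z\<in>S. \<forall>v. A z + Bm v \<in> S" and att: "minima_attained A Bm g \<alpha> S"
    and z: "z \<in> S" and am: "is_argmin_input A Bm g \<alpha> z v"
    and q: "optimal_policy A Bm g \<alpha> (A z + Bm v) q"
  shows "optimal_policy A Bm g \<alpha> z (\<lambda>t. case t of 0 \<Rightarrow> v | Suc n \<Rightarrow> q n)"
proof -
  have "cost A Bm g \<alpha> z (\<lambda>t. case t of 0 \<Rightarrow> v | Suc n \<Rightarrow> q n)
      = ennreal (g z) + ennreal \<alpha> * cost A Bm g \<alpha> (A z + Bm v) q"
    using g0 a0 by (subst cost_step) auto
  also have "\<dots> = Jstar A Bm g \<alpha> z"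
    using q argmin_step[OF g0 a0 inv att z am] unfolding optimal_policy_def by simp
  finally show ?thesis unfolding optimal_policy_def .
qed

lemma opt_traj:
  assumes g0: "\<forall>x. 0 \<le> g x" and a0: "0 < \<alpha>"
    and inv: "\<forall>z\<in>S. \<forall>v. A z + Bm v \<in> S" and att: "minima_attained A Bm g \<alpha> S"
    and z: "z \<in> S" and opt: "optimal_policy A Bm g \<alpha> z p"
  shows "traj A Bm z p t \<in> S \<and> optimal_policy A Bm g \<alpha> (traj A Bm z p t) (\<lambda>n. p (n + t))"
proof (induction t)
  case 0
  then show ?case using z opt by simp
next
  case (Suc t)
  have "optimal_policy A Bm g \<alpha> (A (traj A Bm z p t) + Bm (p (0 + t))) (\<lambda>n. p (Suc n + t))"
    using opt_step(1)[OF g0 a0 inv att, of "traj A Bm z p t" "\<lambda>n. p (n + t)"] Suc by simp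
  then show ?case using inv Suc by simp
qed

lemma opt_traj_argmin:
  assumes g0: "\<forall>x. 0 \<le> g x" and a0: "0 < \<alpha>"
    and inv: "\<forall>z\<in>S. \<forall>v. A z + Bm v \<in> S" and att: "minima_attained A Bm g \<alpha> S"
    and z: "z \<in> S" and opt: "optimal_policy A Bm g \<alpha> z p"
  shows "is_argmin_input A Bm g \<alpha> (traj A Bm z p t) (p t)"
  using opt_step(2)[OF g0 a0 inv att, of "traj A Bm z p t" "\<lambda>n. p (n + t)"]
    opt_traj[OF assms] by simp


section \<open>Projections\<close>

lemma rho_prop:
  assumes dec: "is_decomposition sX A r Xs"
  shows "(\<forall>j\<in>{1..r}. rho r Xs j x \<in> Xs j) \<and> (\<forall>j. j \<notin> {1..r} \<longrightarrow> rho r Xs j x = 0) \<and>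
         x = (\<Sum>j\<in>{1..r}. rho r Xs j x)"
proof -
  have "\<forall>x. \<exists>!f. (\<forall>i\<in>{1..r}. f i \<in> Xs i) \<and> (\<forall>i. i \<notin> {1..r} \<longrightarrow> f i = 0) \<and> x = (\<Sum>i\<in>{1..r}. f i)"
    using dec unfolding is_decomposition_def by (elim conjE)
  hence ex1: "\<exists>!f. (\<forall>i\<in>{1..r}. f i \<in> Xs i) \<and> (\<forall>i. i \<notin> {1..r} \<longrightarrow> f i = 0) \<and> x = (\<Sum>i\<in>{1..r}. f i)"
    by (rule spec)
  define F where "F = (THE f. (\<forall>i\<in>{1..r}. f i \<in> Xs i) \<and> (\<forall>i. i \<notin> {1..r} \<longrightarrow> f i = 0) \<and> x = (\<Sum>i\<in>{1..r}. f i))"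
  have P: "(\<forall>i\<in>{1..r}. F i \<in> Xs i) \<and> (\<forall>i. i \<notin> {1..r} \<longrightarrow> F i = 0) \<and> x = (\<Sum>i\<in>{1..r}. F i)"
    unfolding F_def by (rule theI'[OF ex1])
  have rhoF: "\<And>j. rho r Xs j x = F j" unfolding rho_def F_def by (rule refl)
  show ?thesis unfolding rhoF by (rule P)
qed

lemma rho_unique:
  assumes dec: "is_decomposition sX A r Xs"
    and f: "\<forall>j\<in>{1..r}. f j \<in> Xs j" "\<forall>j. j \<notin> {1..r} \<longrightarrow> f j = 0" "x = (\<Sum>j\<in>{1..r}. f j)"
  shows "rho r Xs i x = f i"
proof -
  have "\<forall>x. \<exists>!f. (\<forall>i\<in>{1..r}. f i \<in> Xs i) \<and> (\<forall>i. i \<notin> {1..r} \<longrightarrow> f i = 0) \<and> x = (\<Sum>i\<in>{1..r}. f i)"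
    using dec unfolding is_decomposition_def by (elim conjE)
  hence ex: "\<exists>!f. (\<forall>i\<in>{1..r}. f i \<in> Xs i) \<and> (\<forall>i. i \<notin> {1..r} \<longrightarrow> f i = 0) \<and> x = (\<Sum>i\<in>{1..r}. f i)"
    by (rule spec)
  have "(THE f. (\<forall>j\<in>{1..r}. f j \<in> Xs j) \<and> (\<forall>j. j \<notin> {1..r} \<longrightarrow> f j = 0) \<and> x = (\<Sum>j\<in>{1..r}. f j)) = f"
    by (rule the1_equality[OF ex]) (intro conjI f)
  thus ?thesis unfolding rho_def by (rule fun_cong)
qed

lemma rho_in: "is_decomposition sX A r Xs \<Longrightarrow> i \<in> {1..r} \<Longrightarrow> rho r Xs i x \<in> Xs i"
  using conjunct1[OF rho_prop[of sX A r Xs x]] by blast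

lemma rho_out: "is_decomposition sX A r Xs \<Longrightarrow> i \<notin> {1..r} \<Longrightarrow> rho r Xs i x = 0"
  using conjunct1[OF conjunct2[OF rho_prop[of sX A r Xs x]]] by blast

lemma rho_sum: "is_decomposition sX A r Xs \<Longrightarrow> x = (\<Sum>j\<in>{1..r}. rho r Xs j x)"
  using conjunct2[OF conjunct2[OF rho_prop[of sX A r Xs x]]] by assumption

lemma rho_add:
  assumes dec: "is_decomposition sX A r Xs" and mod: "module sX"
  shows "rho r Xs i (x + y) = rho r Xs i x + rho r Xs i y"
proof (rule rho_unique[OF dec])
  have sub: "\<forall>j\<in>{1..r}. module.subspace sX (Xs j)" using dec unfolding is_decomposition_def by (elim conjE) blast
  show "\<forall>j\<in>{1..r}. rho r Xs j x + rho r Xs j y \<in> Xs j"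
    using sub rho_in[OF dec] module.subspace_add[OF mod] by blast
  show "\<forall>j. j \<notin> {1..r} \<longrightarrow> rho r Xs j x + rho r Xs j y = 0"
    using rho_out[OF dec] by simp
  show "x + y = (\<Sum>j\<in>{1..r}. rho r Xs j x + rho r Xs j y)"
    unfolding sum.distrib by (rule arg_cong2[where f="(+)"]) (rule rho_sum[OF dec])+
qed

lemma rho_comp_sum:
  assumes dec: "is_decomposition sX A r Xs" and mod: "module sX"
    and h: "\<forall>i\<in>{1..r}. h i \<in> Xs i" and j: "j \<in> {1..r}"
  shows "rho r Xs j (\<Sum>i\<in>{1..r}. h i) = h j"
proof -
  have "rho r Xs j (\<Sum>i\<in>{1..r}. h i) = (\<lambda>i. if i \<in> {1..r} then h i else 0) j"
  proof (rule rho_unique[OF dec])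
    have sub: "\<forall>j\<in>{1..r}. module.subspace sX (Xs j)" using dec unfolding is_decomposition_def by (elim conjE) blast
    show "\<forall>j\<in>{1..r}. (\<lambda>i. if i \<in> {1..r} then h i else 0) j \<in> Xs j" using h by simp
    show "\<forall>j. j \<notin> {1..r} \<longrightarrow> (\<lambda>i. if i \<in> {1..r} then h i else 0) j = 0" by simp
    show "(\<Sum>i\<in>{1..r}. h i) = (\<Sum>j\<in>{1..r}. (\<lambda>i. if i \<in> {1..r} then h i else 0) j)"
      by (rule sum.cong) auto
  qed
  thus ?thesis using j by simp
qed

lemma rho_A:
  assumes dec: "is_decomposition sX A r Xs" and mod: "module sX"
    and lin: "\<And>x y. A (x + y) = A x + A y"
  shows "rho r Xs i (A x) = A (rho r Xs i x)"
proof -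
  have A0: "A 0 = 0" using lin[of 0 0] by simp
  have Asum: "A (sum f S) = (\<Sum>j\<in>S. A (f j))" for f :: "nat \<Rightarrow> _" and S
    by (induction S rule: infinite_finite_induct) (auto simp: A0 lin)
  show ?thesis
  proof (rule rho_unique[OF dec])
    have "\<forall>i\<in>{1..r}. module.subspace sX (Xs i) \<and> A ` Xs i \<subseteq> Xs i"
      using dec unfolding is_decomposition_def by (elim conjE)
    then show "\<forall>j\<in>{1..r}. A (rho r Xs j x) \<in> Xs j"
      using rho_in[OF dec] by blast
    show "\<forall>j. j \<notin> {1..r} \<longrightarrow> A (rho r Xs j x) = 0" using rho_out[OF dec] A0 by simp
    show "A x = (\<Sum>j\<in>{1..r}. A (rho r Xs j x))"
      by (subst rho_sum[OF dec, of x]) (rule Asum)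
  qed
qed

lemma traj_rho:
  assumes dec: "is_decomposition sX A r Xs" and mod: "module sX"
    and lin: "\<And>x y. A (x + y) = A x + A y"
  shows "rho r Xs i (traj A B x p t) = traj A (rho r Xs i \<circ> B) (rho r Xs i x) p t"
proof (induction t)
  case 0
  then show ?case by simp
next
  case (Suc t)
  have "rho r Xs i (traj A B x p (Suc t)) = rho r Xs i (A (traj A B x p t)) + rho r Xs i (B (p t))"
    by (simp add: rho_add[OF dec mod])
  also have "\<dots> = A (rho r Xs i (traj A B x p t)) + rho r Xs i (B (p t))"
    by (simp only: rho_A[OF dec mod lin])
  also have "\<dots> = traj A (rho r Xs i \<circ> B) (rho r Xs i x) p (Suc t)"
    by (simp only: traj.simps Suc.IH comp_apply[of "rho r Xs i" B "p t"])
  finally show ?case .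
qed

lemma cost_decomp:
  assumes sep: "separable_cost r Xs g" and a0: "0 \<le> \<alpha>"
    and tr: "\<forall>i\<in>{1..r}. \<forall>t. rho r Xs i (traj A B x p t) = traj A (rho r Xs i \<circ> B) (rho r Xs i x) (q i) t"
  shows "cost A B g \<alpha> x p = (\<Sum>i\<in>{1..r}. cost A (rho r Xs i \<circ> B) g \<alpha> (rho r Xs i x) (q i))"
proof -
  have g0: "\<forall>x. 0 \<le> g x" using sep unfolding separable_cost_def by (rule conjunct1)
  have sepg: "\<forall>x. g x = (\<Sum>i\<in>{1..r}. g (rho r Xs i x))" using sep unfolding separable_cost_def by (rule conjunct2)
  have "\<And>t. ennreal (\<alpha>^t * g (traj A B x p t)) =
      (\<Sum>i\<in>{1..r}. ennreal (\<alpha>^t * g (traj A (rho r Xs i \<circ> B) (rho r Xs i x) (q i) t)))"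
  proof -
    fix t
    have "g (traj A B x p t) = (\<Sum>i\<in>{1..r}. g (rho r Xs i (traj A B x p t)))"
      by (rule spec[OF sepg])
    also have "\<dots> = (\<Sum>i\<in>{1..r}. g (traj A (rho r Xs i \<circ> B) (rho r Xs i x) (q i) t))"
      using tr by (intro sum.cong) auto
    finally have "\<alpha>^t * g (traj A B x p t) = (\<Sum>i\<in>{1..r}. \<alpha>^t * g (traj A (rho r Xs i \<circ> B) (rho r Xs i x) (q i) t))"
      by (simp only: sum_distrib_left)
    hence "ennreal (\<alpha>^t * g (traj A B x p t)) =
      ennreal (\<Sum>i\<in>{1..r}. \<alpha>^t * g (traj A (rho r Xs i \<circ> B) (rho r Xs i x) (q i) t))"
      by (rule arg_cong)
    also have "\<dots> = (\<Sum>i\<in>{1..r}. ennreal (\<alpha>^t * g (traj A (rho r Xs i \<circ> B) (rho r Xs i x) (q i) t)))"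
      by (rule sum_ennreal[symmetric]) (use a0 g0 in simp)
    finally show "ennreal (\<alpha>^t * g (traj A B x p t)) =
      (\<Sum>i\<in>{1..r}. ennreal (\<alpha>^t * g (traj A (rho r Xs i \<circ> B) (rho r Xs i x) (q i) t)))" .
  qed
  hence "cost A B g \<alpha> x p = (\<Sum>t. \<Sum>i\<in>{1..r}. ennreal (\<alpha>^t * g (traj A (rho r Xs i \<circ> B) (rho r Xs i x) (q i) t)))"
    unfolding cost_def by simp
  also have "\<dots> = (\<Sum>i\<in>{1..r}. \<Sum>t. ennreal (\<alpha>^t * g (traj A (rho r Xs i \<circ> B) (rho r Xs i x) (q i) t)))"
    by (rule suminf_sum) (rule summableI)
  finally show ?thesis unfolding cost_def .
qed

theorem lemma4:
  fixes sX :: "'f::field \<Rightarrow> 'x::ab_group_add \<Rightarrow> 'x"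
    and sU :: "'f \<Rightarrow> 'u::ab_group_add \<Rightarrow> 'u"
    and A :: "'x \<Rightarrow> 'x" and B :: "'u \<Rightarrow> 'x"
    and g :: "'x \<Rightarrow> real" and \<alpha> :: real
    and r :: nat and Xs :: "nat \<Rightarrow> 'x set"
  assumes "fin_dim_vs sX" and "fin_dim_vs sU"
    and "Vector_Spaces.linear sX sX A" and "Vector_Spaces.linear sU sX B" and "inj B"
    and "\<forall>x. g x = 0 \<longleftrightarrow> x = 0"
    and "is_decomposition sX A r Xs"
    and "separable_cost r Xs g"
    and "0 < \<alpha>" and "\<alpha> < 1"
    and "minima_attained A B g \<alpha> UNIV"
    and "\<forall>i\<in>{1..r}. minima_attained A (rho r Xs i \<circ> B) g \<alpha> (Xs i)"
  shows "is_problem_decomposition A B g \<alpha> r Xs \<longleftrightarrow>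
    (\<forall>us. (\<forall>i\<in>{1..r}. optimal_control_law A (rho r Xs i \<circ> B) g \<alpha> (Xs i) (us i)) \<longrightarrow>
      (\<exists>u. optimal_control_law A B g \<alpha> UNIV u \<and>
        (\<forall>x. \<forall>i\<in>{1..r}.
           rho r Xs i (A x + B (u x)) = A (rho r Xs i x) + rho r Xs i (B (us i (rho r Xs i x))))))"
proof -
  let ?I = "{1..r}"
  note dec = assms(7)
  have g0: "\<forall>x. 0 \<le> g x" using assms(8) unfolding separable_cost_def by (rule conjunct1)
  have a0: "0 < \<alpha>" by (rule assms(9))
  have mod: "module sX" using assms(1) unfolding fin_dim_vs_def module_iff_vector_space by (rule conjunct1)
  have linA: "\<And>x y. A (x + y) = A x + A y" using assms(3) by (metis Vector_Spaces.linear_iff)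
  have decs: "\<forall>i\<in>?I. module.subspace sX (Xs i) \<and> A ` Xs i \<subseteq> Xs i"
    using dec unfolding is_decomposition_def by (elim conjE)
  have invi: "\<forall>z\<in>Xs i. \<forall>v. A z + (rho r Xs i \<circ> B) v \<in> Xs i" if i: "i \<in> ?I" for i
  proof (intro ballI allI)
    fix z v assume z: "z \<in> Xs i"
    have "A z \<in> Xs i" using decs i z by blast
    moreover have "(rho r Xs i \<circ> B) v \<in> Xs i" using rho_in[OF dec i] by simp
    ultimately show "A z + (rho r Xs i \<circ> B) v \<in> Xs i"
      using module.subspace_add[OF mod] decs i by blast
  qed
  have invU: "\<forall>z\<in>(UNIV::'x set). \<forall>v. A z + B v \<in> UNIV" by simp
  note attU = assms(11)
  have atti: "minima_attained A (rho r Xs i \<circ> B) g \<alpha> (Xs i)" if "i \<in> ?I" for i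
    using assms(12) that by blast
  note rA = rho_A[OF dec mod linA]
  note radd = rho_add[OF dec mod]

  have Jge: "(\<Sum>i\<in>?I. Jstar A (rho r Xs i \<circ> B) g \<alpha> (rho r Xs i x)) \<le> Jstar A B g \<alpha> x" for x
  proof -
    obtain p where p: "optimal_policy A B g \<alpha> x p" using attU unfolding minima_attained_def by blast
    have "cost A B g \<alpha> x p = (\<Sum>i\<in>?I. cost A (rho r Xs i \<circ> B) g \<alpha> (rho r Xs i x) p)"
      by (rule cost_decomp[OF assms(8) less_imp_le[OF a0]])
         (simp add: traj_rho[OF dec mod linA])
    moreover have "(\<Sum>i\<in>?I. Jstar A (rho r Xs i \<circ> B) g \<alpha> (rho r Xs i x))
        \<le> (\<Sum>i\<in>?I. cost A (rho r Xs i \<circ> B) g \<alpha> (rho r Xs i x) p)"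
      by (intro sum_mono) (unfold Jstar_def, rule INF_lower, simp)
    ultimately show ?thesis using p unfolding optimal_policy_def by simp
  qed

  show ?thesis
  proof
    assume D: "is_problem_decomposition A B g \<alpha> r Xs"
    show "\<forall>us. (\<forall>i\<in>?I. optimal_control_law A (rho r Xs i \<circ> B) g \<alpha> (Xs i) (us i)) \<longrightarrow>
      (\<exists>u. optimal_control_law A B g \<alpha> UNIV u \<and>
        (\<forall>x. \<forall>i\<in>?I.
           rho r Xs i (A x + B (u x)) = A (rho r Xs i x) + rho r Xs i (B (us i (rho r Xs i x)))))"
    proof (intro allI impI)
      fix us assume U: "\<forall>i\<in>?I. optimal_control_law A (rho r Xs i \<circ> B) g \<alpha> (Xs i) (us i)"
      define y where "y x i = A (rho r Xs i x) + (rho r Xs i \<circ> B) (us i (rho r Xs i x))" for x i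
      define q where "q x i = (SOME q. optimal_policy A (rho r Xs i \<circ> B) g \<alpha> (y x i) q)" for x i
      define ps where "ps x i = (\<lambda>t. case t of 0 \<Rightarrow> us i (rho r Xs i x) | Suc n \<Rightarrow> q x i n)" for x i
      have psopt: "optimal_policy A (rho r Xs i \<circ> B) g \<alpha> (rho r Xs i x) (ps x i)"
        if i: "i \<in> ?I" for x i
      proof -
        have rx: "rho r Xs i x \<in> Xs i" by (rule rho_in[OF dec i])
        have "y x i \<in> Xs i" unfolding y_def using invi[OF i] rx by blast
        hence "\<exists>q. optimal_policy A (rho r Xs i \<circ> B) g \<alpha> (y x i) q"
          using atti[OF i] unfolding minima_attained_def by blast
        hence qo: "optimal_policy A (rho r Xs i \<circ> B) g \<alpha> (y x i) (q x i)"
          unfolding q_def by (rule someI_ex)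
        have am: "is_argmin_input A (rho r Xs i \<circ> B) g \<alpha> (rho r Xs i x) (us i (rho r Xs i x))"
          using U i rx unfolding optimal_control_law_def by blast
        show ?thesis unfolding ps_def
          by (rule argmin_then_opt[OF g0 a0 invi[OF i] atti[OF i] rx am]) (use qo in \<open>simp add: y_def\<close>)
      qed
      have D2: "\<forall>x ps. (\<forall>i\<in>?I. optimal_policy A (rho r Xs i \<circ> B) g \<alpha> (rho r Xs i x) (ps i)) \<longrightarrow>
        (\<exists>p. optimal_policy A B g \<alpha> x p \<and> (\<forall>t. B (p t) = (\<Sum>i\<in>?I. rho r Xs i (B (ps i t)))))"
        using D unfolding is_problem_decomposition_def by (rule conjunct2)
      have "\<exists>p. optimal_policy A B g \<alpha> x p \<and> (\<forall>t. B (p t) = (\<Sum>i\<in>?I. rho r Xs i (B (ps x i t))))" for x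
        using D2 psopt by blast
      then obtain P where P: "\<And>x. optimal_policy A B g \<alpha> x (P x) \<and> (\<forall>t. B (P x t) = (\<Sum>i\<in>?I. rho r Xs i (B (ps x i t))))"
        by metis
      define u where "u x = P x 0" for x
      show "\<exists>u. optimal_control_law A B g \<alpha> UNIV u \<and>
        (\<forall>x. \<forall>i\<in>?I.
           rho r Xs i (A x + B (u x)) = A (rho r Xs i x) + rho r Xs i (B (us i (rho r Xs i x))))"
      proof (intro exI conjI)
        show "optimal_control_law A B g \<alpha> UNIV u"
          unfolding optimal_control_law_def u_def
          using opt_step(2)[OF g0 a0 invU attU] P by blast
        show "\<forall>x. \<forall>i\<in>?I.
           rho r Xs i (A x + B (u x)) = A (rho r Xs i x) + rho r Xs i (B (us i (rho r Xs i x)))"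
        proof (intro allI ballI)
          fix x i assume i: "i \<in> ?I"
          have Bu: "B (u x) = (\<Sum>j\<in>?I. rho r Xs j (B (us j (rho r Xs j x))))"
            using P[of x] unfolding u_def ps_def by simp
          have "rho r Xs i (B (u x)) = rho r Xs i (B (us i (rho r Xs i x)))"
            unfolding Bu by (rule rho_comp_sum[OF dec mod _ i]) (use rho_in[OF dec] in blast)
          then show "rho r Xs i (A x + B (u x)) = A (rho r Xs i x) + rho r Xs i (B (us i (rho r Xs i x)))"
            by (simp add: radd rA)
        qed
      qed
    qed
  next
    assume C: "\<forall>us. (\<forall>i\<in>?I. optimal_control_law A (rho r Xs i \<circ> B) g \<alpha> (Xs i) (us i)) \<longrightarrow>
      (\<exists>u. optimal_control_law A B g \<alpha> UNIV u \<and>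
        (\<forall>x. \<forall>i\<in>?I.
           rho r Xs i (A x + B (u x)) = A (rho r Xs i x) + rho r Xs i (B (us i (rho r Xs i x)))))"
    have K: "\<exists>p. cost A B g \<alpha> x p = (\<Sum>i\<in>?I. Jstar A (rho r Xs i \<circ> B) g \<alpha> (rho r Xs i x)) \<and>
               (\<forall>t. B (p t) = (\<Sum>i\<in>?I. rho r Xs i (B (ps i t))))"
      if O: "\<forall>i\<in>?I. optimal_policy A (rho r Xs i \<circ> B) g \<alpha> (rho r Xs i x) (ps i)" for x ps
    proof -
      define z where "z i t = traj A (rho r Xs i \<circ> B) (rho r Xs i x) (ps i) t" for i t
      have zin: "z i t \<in> Xs i" if i: "i \<in> ?I" for i t
        unfolding z_def using opt_traj[OF g0 a0 invi[OF i] atti[OF i] rho_in[OF dec i]] O i by blast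
      have zam: "is_argmin_input A (rho r Xs i \<circ> B) g \<alpha> (z i t) (ps i t)" if i: "i \<in> ?I" for i t
        unfolding z_def using opt_traj_argmin[OF g0 a0 invi[OF i] atti[OF i] rho_in[OF dec i]] O i by blast
      have ex: "\<exists>v. \<forall>i\<in>?I. rho r Xs i (B v) = rho r Xs i (B (ps i t))" for t
      proof -
        define us where "us i w = (if w = z i t then ps i t else (SOME v. is_argmin_input A (rho r Xs i \<circ> B) g \<alpha> w v))" for i w
        have law: "\<forall>i\<in>?I. optimal_control_law A (rho r Xs i \<circ> B) g \<alpha> (Xs i) (us i)"
        proof (intro ballI, unfold optimal_control_law_def, intro ballI)
          fix i w assume i: "i \<in> ?I" and w: "w \<in> Xs i"
          show "is_argmin_input A (rho r Xs i \<circ> B) g \<alpha> w (us i w)"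
          proof (cases "w = z i t")
            case True
            then show ?thesis unfolding us_def using zam[OF i] by simp
          next
            case False
            have "\<exists>v. is_argmin_input A (rho r Xs i \<circ> B) g \<alpha> w v"
              using atti[OF i] w unfolding minima_attained_def by blast
            then show ?thesis unfolding us_def using False by (simp add: someI_ex)
          qed
        qed
        from C law obtain u where
          cond: "\<forall>x. \<forall>i\<in>?I. rho r Xs i (A x + B (u x)) = A (rho r Xs i x) + rho r Xs i (B (us i (rho r Xs i x)))"
          by blast
        define x' where "x' = (\<Sum>i\<in>?I. z i t)"
        have rx: "rho r Xs i x' = z i t" if i: "i \<in> ?I" for i
          unfolding x'_def by (rule rho_comp_sum[OF dec mod _ i]) (use zin in blast)
        show ?thesis
        proof (intro exI ballI)
          fix i assume i: "i \<in> ?I"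
          have "A (rho r Xs i x') + rho r Xs i (B (u x')) = A (rho r Xs i x') + rho r Xs i (B (us i (rho r Xs i x')))"
            using cond i by (simp add: radd rA)
          hence "rho r Xs i (B (u x')) = rho r Xs i (B (us i (rho r Xs i x')))" by simp
          then show "rho r Xs i (B (u x')) = rho r Xs i (B (ps i t))"
            using rx[OF i] by (simp add: us_def)
        qed
      qed
      define p where "p t = (SOME v. \<forall>i\<in>?I. rho r Xs i (B v) = rho r Xs i (B (ps i t)))" for t
      have pp: "\<forall>i\<in>?I. rho r Xs i (B (p t)) = rho r Xs i (B (ps i t))" for t
        unfolding p_def by (rule someI_ex[OF ex])
      have Bp: "B (p t) = (\<Sum>i\<in>?I. rho r Xs i (B (ps i t)))" for t
      proof -
        have "B (p t) = (\<Sum>i\<in>?I. rho r Xs i (B (p t)))" by (rule rho_sum[OF dec])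
        also have "\<dots> = (\<Sum>i\<in>?I. rho r Xs i (B (ps i t)))" using pp[of t] by (intro sum.cong) auto
        finally show ?thesis .
      qed
      have tr: "\<forall>i\<in>?I. \<forall>t. rho r Xs i (traj A B x p t) = traj A (rho r Xs i \<circ> B) (rho r Xs i x) (ps i) t"
      proof (intro ballI allI)
        fix i t assume i: "i \<in> ?I"
        show "rho r Xs i (traj A B x p t) = traj A (rho r Xs i \<circ> B) (rho r Xs i x) (ps i) t"
        proof (induction t)
          case 0 then show ?case by simp
        next
          case (Suc t)
          have "rho r Xs i (traj A B x p (Suc t)) = A (rho r Xs i (traj A B x p t)) + rho r Xs i (B (p t))"
            by (simp add: radd rA)
          also have "\<dots> = A (traj A (rho r Xs i \<circ> B) (rho r Xs i x) (ps i) t) + rho r Xs i (B (ps i t))"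
            using Suc.IH pp[of t] i by (simp del: comp_apply)
          also have "\<dots> = traj A (rho r Xs i \<circ> B) (rho r Xs i x) (ps i) (Suc t)"
            by (simp only: traj.simps comp_apply[of "rho r Xs i" B "ps i t"])
          finally show ?case .
        qed
      qed
      have "cost A B g \<alpha> x p = (\<Sum>i\<in>?I. cost A (rho r Xs i \<circ> B) g \<alpha> (rho r Xs i x) (ps i))"
        by (rule cost_decomp[OF assms(8) less_imp_le[OF a0] tr])
      also have "\<dots> = (\<Sum>i\<in>?I. Jstar A (rho r Xs i \<circ> B) g \<alpha> (rho r Xs i x))"
        using O unfolding optimal_policy_def by (intro sum.cong) auto
      finally show ?thesis using Bp by blast
    qed
    have part1: "Jstar A B g \<alpha> x = (\<Sum>i\<in>?I. Jstar A (rho r Xs i \<circ> B) g \<alpha> (rho r Xs i x))" for x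
    proof -
      have "\<forall>i\<in>?I. \<exists>q. optimal_policy A (rho r Xs i \<circ> B) g \<alpha> (rho r Xs i x) q"
        using atti rho_in[OF dec] unfolding minima_attained_def by blast
      then obtain ps where "\<forall>i\<in>?I. optimal_policy A (rho r Xs i \<circ> B) g \<alpha> (rho r Xs i x) (ps i)"
        by metis
      from K[OF this] obtain p where p: "cost A B g \<alpha> x p = (\<Sum>i\<in>?I. Jstar A (rho r Xs i \<circ> B) g \<alpha> (rho r Xs i x))"
        by blast
      have "Jstar A B g \<alpha> x \<le> cost A B g \<alpha> x p" unfolding Jstar_def by (rule INF_lower) simp
      with p Jge[of x] show ?thesis by simp
    qed
    show "is_problem_decomposition A B g \<alpha> r Xs"
      unfolding is_problem_decomposition_def
    proof (intro conjI allI impI)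
      fix x show "Jstar A B g \<alpha> x = (\<Sum>i\<in>?I. Jstar A (rho r Xs i \<circ> B) g \<alpha> (rho r Xs i x))"
        by (rule part1)
    next
      fix x ps assume O: "\<forall>i\<in>?I. optimal_policy A (rho r Xs i \<circ> B) g \<alpha> (rho r Xs i x) (ps i)"
      from K[OF O] obtain p where
        p: "cost A B g \<alpha> x p = (\<Sum>i\<in>?I. Jstar A (rho r Xs i \<circ> B) g \<alpha> (rho r Xs i x))"
          "\<forall>t. B (p t) = (\<Sum>i\<in>?I. rho r Xs i (B (ps i t)))" by blast
      show "\<exists>p. optimal_policy A B g \<alpha> x p \<and> (\<forall>t. B (p t) = (\<Sum>i\<in>?I. rho r Xs i (B (ps i t))))"
        using p part1[of x] unfolding optimal_policy_def by auto
    qed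
  qed
qed

end
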